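(* Let $E=(e_1,\dots,e_{4n-1})$ be a positively oriented $J$-basis. The stem-quadrant $SQ(E)=\{\vec u\in\mathbb{R}^{4n-1}:\vec u+\mathcal{H}_E\subset\mathcal{H}_E\}$ equals the closed convex cone $\{-\alpha e_1+\beta e_{4n-1}:\alpha,\beta\ge0\}$ generated by $-e_1$ and $e_{4n-1}$.
   Context: $\mathbb{R}^{2n,2n-1}$ is $\mathbb{R}^{4n-1}$ with form $v^TJw$, $J$ antidiagonal with $J_{i,4n-i}=(-1)^i$; a $J$-basis is one in which the Gram matrix is $J$. For a nonzero vector $v$, $S^+_E(v)$ (resp. $S^-_E(v)$) is the number of sign changes of its coordinate sequence in $E$ when signs are assigned to zero coordinates so as to maximize (resp. minimize) this number. $\mathcal{H}_E=\{v: S^+_E(v)\le 2n-1$, and in case of equality the sign of the last coordinate used in computing $S^+_E$ is positive$\}$ (the open crooked halfspace); $\overline{\mathcal{H}}_E=\{v: S^-_E(v)\le 2n-1$, and in case of equality the last nonzero coordinate is positive$\}$ is its closure. *)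

theory Defs
  imports "HOL-Analysis.Analysis"
begin

text \<open>Vectors of R^{2n,2n-1} = R^{4n-1} are functions nat => real supported on {1..4n-1}.\<close>

definition dimN :: "nat \<Rightarrow> nat" where
  "dimN n = 4 * n - 1"

definition Rvec :: "nat \<Rightarrow> (nat \<Rightarrow> real) set" where
  "Rvec n = {v. \<forall>i. (i < 1 \<or> i > dimN n) \<longrightarrow> v i = 0}"

text \<open>The form v^T J w with J antidiagonal, J(i, 4n-i) = (-1)^i.\<close>
definition Jform :: "nat \<Rightarrow> (nat \<Rightarrow> real) \<Rightarrow> (nat \<Rightarrow> real) \<Rightarrow> real" where
  "Jform n v w = (\<Sum>i=1..dimN n. (-1) ^ i * v i * w (4 * n - i))"

definition Jmat :: "nat \<Rightarrow> nat \<Rightarrow> nat \<Rightarrow> real" where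
  "Jmat n i j = (if j = 4 * n - i then (-1) ^ i else 0)"

definition is_J_basis :: "nat \<Rightarrow> (nat \<Rightarrow> nat \<Rightarrow> real) \<Rightarrow> bool" where
  "is_J_basis n E \<longleftrightarrow> (\<forall>i\<in>{1..dimN n}. E i \<in> Rvec n) \<and>
     (\<forall>i\<in>{1..dimN n}. \<forall>j\<in>{1..dimN n}. Jform n (E i) (E j) = Jmat n i j)"

definition basis_det :: "nat \<Rightarrow> (nat \<Rightarrow> nat \<Rightarrow> real) \<Rightarrow> real" where
  "basis_det n E = (\<Sum>p\<in>{p. p permutes {1..dimN n}}.
      of_int (sign p) * (\<Prod>j\<in>{1..dimN n}. E j (p j)))"

definition pos_oriented :: "nat \<Rightarrow> (nat \<Rightarrow> nat \<Rightarrow> real) \<Rightarrow> bool" where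
  "pos_oriented n E \<longleftrightarrow> basis_det n E > 0"

definition coords :: "nat \<Rightarrow> (nat \<Rightarrow> nat \<Rightarrow> real) \<Rightarrow> (nat \<Rightarrow> real) \<Rightarrow> (nat \<Rightarrow> real)" where
  "coords n E v = (THE c. (\<forall>i. (i < 1 \<or> i > dimN n) \<longrightarrow> c i = 0) \<and>
                          v = (\<lambda>k. \<Sum>i=1..dimN n. c i * E i k))"

definition compat_signs :: "nat \<Rightarrow> (nat \<Rightarrow> real) \<Rightarrow> (nat \<Rightarrow> real) set" where
  "compat_signs n c = {s. (\<forall>i\<in>{1..dimN n}. s i \<in> {1, -1} \<and> (c i \<noteq> 0 \<longrightarrow> s i = sgn (c i)))}"

definition sign_changes :: "nat \<Rightarrow> (nat \<Rightarrow> real) \<Rightarrow> nat" where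
  "sign_changes n s = card {i\<in>{1..<dimN n}. s i \<noteq> s (i + 1)}"

definition Splus :: "nat \<Rightarrow> (nat \<Rightarrow> real) \<Rightarrow> nat" where
  "Splus n c = Max (sign_changes n ` compat_signs n c)"

definition Sminus :: "nat \<Rightarrow> (nat \<Rightarrow> real) \<Rightarrow> nat" where
  "Sminus n c = Min (sign_changes n ` compat_signs n c)"

definition crooked_H :: "nat \<Rightarrow> (nat \<Rightarrow> nat \<Rightarrow> real) \<Rightarrow> (nat \<Rightarrow> real) set" where
  "crooked_H n E = {v \<in> Rvec n. v \<noteq> (\<lambda>_. 0) \<and>
     (let c = coords n E v in
       Splus n c < 2 * n - 1 \<or>
       (Splus n c = 2 * n - 1 \<and>
         (\<exists>s\<in>compat_signs n c. sign_changes n s = Splus n c \<and> s (dimN n) = 1)))}"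

definition stem_quadrant :: "nat \<Rightarrow> (nat \<Rightarrow> nat \<Rightarrow> real) \<Rightarrow> (nat \<Rightarrow> real) set" where
  "stem_quadrant n E = {u \<in> Rvec n. \<forall>v\<in>crooked_H n E. (\<lambda>k. u k + v k) \<in> crooked_H n E}"

end

theory Submission imports Defs "HOL-Library.Function_Algebras" begin

definition chg :: "(nat \<Rightarrow> real) \<Rightarrow> nat \<Rightarrow> nat \<Rightarrow> nat" where
  "chg e a b = card {i\<in>{a..<b}. e i \<noteq> e (Suc i)}"

lemma chg_split:
  assumes "a \<le> b" "b \<le> c"
  shows "chg e a c = chg e a b + chg e b c"
proof -
  have "{i\<in>{a..<c}. e i \<noteq> e (Suc i)} = {i\<in>{a..<b}. e i \<noteq> e (Suc i)} \<union> {i\<in>{b..<c}. e i \<noteq> e (Suc i)}"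
    using assms by auto
  moreover have "{i\<in>{a..<b}. e i \<noteq> e (Suc i)} \<inter> {i\<in>{b..<c}. e i \<noteq> e (Suc i)} = {}" by auto
  ultimately show ?thesis unfolding chg_def by (simp add: card_Un_disjoint)
qed

lemma chg_one: "chg e a (Suc a) = (if e a \<noteq> e (Suc a) then 1 else 0)"
proof -
  have "{i\<in>{a..<Suc a}. e i \<noteq> e (Suc i)} = (if e a \<noteq> e (Suc a) then {a} else {})" by auto
  then show ?thesis unfolding chg_def by simp
qed

lemma chg_cong:
  assumes "\<And>i. a \<le> i \<Longrightarrow> i \<le> b \<Longrightarrow> e i = e' i"
  shows "chg e a b = chg e' a b"
proof -
  have "{i\<in>{a..<b}. e i \<noteq> e (Suc i)} = {i\<in>{a..<b}. e' i \<noteq> e' (Suc i)}"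
    using assms by auto
  then show ?thesis unfolding chg_def by simp
qed

lemma chg_le: "chg e a b \<le> b - a"
proof -
  have "card {i\<in>{a..<b}. e i \<noteq> e (Suc i)} \<le> card {a..<b}" by (rule card_mono) auto
  then show ?thesis unfolding chg_def by simp
qed

lemma chg_parity:
  assumes "a \<le> b" "\<And>i. a \<le> i \<Longrightarrow> i \<le> b \<Longrightarrow> e i \<in> {1, -1}"
  shows "even (chg e a b) \<longleftrightarrow> e a = e b"
  using assms
proof (induction b)
  case 0
  then show ?case by (simp add: chg_def)
next
  case (Suc b)
  show ?case
  proof (cases "a = Suc b")
    case True then show ?thesis by (simp add: chg_def)
  next
    case False
    then have ab: "a \<le> b" using Suc by simp
    have IH: "even (chg e a b) \<longleftrightarrow> e a = e b" using Suc.IH[OF ab] Suc.prems(2) by simp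
    have sp: "chg e a (Suc b) = chg e a b + chg e b (Suc b)" using chg_split[OF ab, of "Suc b" e] by simp
    have h: "e a \<in> {1,-1}" "e b \<in> {1,-1}" "e (Suc b) \<in> {1,-1}" using Suc.prems(2)[of a] Suc.prems(2)[of b] Suc.prems(2)[of "Suc b"] ab by simp_all
    show ?thesis
    proof (cases "e b = e (Suc b)")
      case True
      then show ?thesis using IH sp chg_one[of e b] by simp
    next
      case False
      then have "e (Suc b) = - e b" using h by auto
      moreover have "e a = e b \<longleftrightarrow> e a \<noteq> - e b" using h by auto
      ultimately show ?thesis using IH sp chg_one[of e b] False by simp
    qed
  qed
qed

lemma chg_flip:
  assumes "a < j" "j < b" "\<And>i. a \<le> i \<Longrightarrow> i \<le> b \<Longrightarrow> e i \<in> {1, -1}"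
  defines "e' \<equiv> e(j := - e j)"
  shows "e (j-1) = e j \<or> e j = e (Suc j) \<Longrightarrow> chg e a b \<le> chg e' a b"
    and "e (j-1) = e j \<Longrightarrow> e j = e (Suc j) \<Longrightarrow> chg e' a b = chg e a b + 2"
proof -
  define C where "C = {i\<in>{a..<b}. e i \<noteq> e (Suc i)}"
  define C' where "C' = {i\<in>{a..<b}. e' i \<noteq> e' (Suc i)}"
  have fin: "finite C" "finite C'" unfolding C_def C'_def by auto
  have ej: "e j \<in> {1,-1}" "e (j-1) \<in> {1,-1}" "e (Suc j) \<in> {1,-1}" using assms by auto
  have same: "i \<notin> {j-1, j} \<Longrightarrow> i \<in> C \<longleftrightarrow> i \<in> C'" for i
    unfolding C_def C'_def e'_def using assms(1,2) by auto
  have m1: "j - 1 \<in> C' \<longleftrightarrow> e (j-1) = e j" unfolding C'_def e'_def using assms(1,2) ej by auto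
  have m1': "j - 1 \<in> C \<longleftrightarrow> e (j-1) \<noteq> e j" unfolding C_def using assms(1,2) ej by auto
  have m2: "j \<in> C' \<longleftrightarrow> e j = e (Suc j)" unfolding C'_def e'_def using assms(1,2) ej by auto
  have m2': "j \<in> C \<longleftrightarrow> e j \<noteq> e (Suc j)" unfolding C_def using assms(1,2) ej by auto
  have jj: "j - 1 \<noteq> j" using assms by auto
  show "chg e a b \<le> chg e' a b" if h: "e (j-1) = e j \<or> e j = e (Suc j)"
  proof -
    obtain p q where pq: "{p,q} = {j-1,j}" "p \<notin> C" "p \<in> C'"
      using h m1 m1' m2 m2' by (metis insert_commute)
    have pq2: "p \<noteq> q" using pq jj by (metis doubleton_eq_iff)
    have "C - {q} \<subseteq> C'"
    proof
      fix i assume i: "i \<in> C - {q}"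
      show "i \<in> C'"
      proof (cases "i \<in> {j-1, j}")
        case True
        then have "i = p \<or> i = q" using pq(1) by blast
        then show ?thesis using i pq by auto
      next
        case False then show ?thesis using same i by blast
      qed
    qed
    then have "insert p (C - {q}) \<subseteq> C'" using pq by blast
    then have "card (insert p (C - {q})) \<le> card C'" using fin by (simp add: card_mono)
    moreover have "card (insert p (C - {q})) = card (C - {q}) + 1" using pq fin by simp
    moreover have "card C \<le> card (C - {q}) + 1" using fin
      by (cases "q \<in> C") (auto simp: card_Diff_singleton card_gt_0_iff)
    ultimately show ?thesis unfolding chg_def C_def[symmetric] C'_def[symmetric] by linarith
  qed
  show "chg e' a b = chg e a b + 2" if h1: "e (j-1) = e j" and h2: "e j = e (Suc j)"
  proof -
    have "C' = C \<union> {j-1, j}"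
    proof (rule set_eqI)
      fix i show "i \<in> C' \<longleftrightarrow> i \<in> C \<union> {j-1, j}"
        using same[of i] m1 m2 h1 h2 by (cases "i \<in> {j-1,j}") auto
    qed
    moreover have "C \<inter> {j-1,j} = {}" using m1' m2' h1 h2 by auto
    ultimately have "card C' = card C + 2" using fin jj by (simp add: card_insert_if)
    then show ?thesis unfolding chg_def C_def[symmetric] C'_def[symmetric] by simp
  qed
qed


definition ext :: "nat \<Rightarrow> (nat \<Rightarrow> real) \<Rightarrow> nat \<Rightarrow> real" where
  "ext n s i = (if i = 0 then -1 else if i = Suc (dimN n) then 1 else s i)"

definition chp :: "nat \<Rightarrow> (nat \<Rightarrow> real) \<Rightarrow> nat" where
  "chp n s = chg (ext n s) 0 (Suc (dimN n))"

lemma dimN_ge: "n \<ge> 1 \<Longrightarrow> dimN n \<ge> 3"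
  unfolding dimN_def by simp

lemma sign_changes_chg: "sign_changes n s = chg s 1 (dimN n)"
  unfolding sign_changes_def chg_def by simp

lemma compat_pm: "s \<in> compat_signs n c \<Longrightarrow> 1 \<le> i \<Longrightarrow> i \<le> dimN n \<Longrightarrow> s i \<in> {1, -1}"
  unfolding compat_signs_def by auto

lemma compat_sgn: "s \<in> compat_signs n c \<Longrightarrow> 1 \<le> i \<Longrightarrow> i \<le> dimN n \<Longrightarrow> c i \<noteq> 0 \<Longrightarrow> s i = sgn (c i)"
  unfolding compat_signs_def by auto

lemma ext_pm: 
  assumes "\<And>i. 1 \<le> i \<Longrightarrow> i \<le> dimN n \<Longrightarrow> s i \<in> {1, -1}" "i \<le> Suc (dimN n)"
  shows "ext n s i \<in> {1, -1}"
  using assms unfolding ext_def by (cases "i = 0") auto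

lemma chp_decomp:
  assumes "n \<ge> 1" "\<And>i. 1 \<le> i \<Longrightarrow> i \<le> dimN n \<Longrightarrow> s i \<in> {1, -1}"
  shows "chp n s = sign_changes n s + (if s 1 = 1 then 1 else 0) + (if s (dimN n) = -1 then 1 else 0)"
proof -
  let ?N = "dimN n"
  let ?e = "ext n s"
  have N3: "?N \<ge> 3" using dimN_ge assms by simp
  have "chp n s = chg ?e 0 1 + chg ?e 1 (Suc ?N)" unfolding chp_def using chg_split[of 0 1 "Suc ?N" ?e] N3 by simp
  also have "chg ?e 1 (Suc ?N) = chg ?e 1 ?N + chg ?e ?N (Suc ?N)" using chg_split[of 1 ?N "Suc ?N" ?e] N3 by simp
  also have "chg ?e 1 ?N = sign_changes n s" unfolding sign_changes_chg
    by (rule chg_cong) (auto simp: ext_def)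
  also have "chg ?e 0 1 = (if s 1 = 1 then 1 else 0)"
  proof -
    have "s 1 \<in> {1,-1}" using assms(2)[of 1] N3 by simp
    moreover have "?e 0 = -1" "?e 1 = s 1" using N3 by (auto simp: ext_def)
    ultimately show ?thesis using chg_one[of ?e 0] by auto
  qed
  also have "chg ?e ?N (Suc ?N) = (if s ?N = -1 then 1 else 0)"
  proof -
    have "s ?N \<in> {1,-1}" using assms(2)[of ?N] N3 by simp
    moreover have "?e ?N = s ?N" "?e (Suc ?N) = 1" using N3 by (auto simp: ext_def)
    ultimately show ?thesis using chg_one[of ?e ?N] by auto
  qed
  finally show ?thesis by simp
qed

lemma compat_nonempty: "(\<lambda>i. if c i < 0 then -1 else 1) \<in> compat_signs n c"
  unfolding compat_signs_def by (auto simp: sgn_if)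

lemma Splus_props:
  shows "finite (sign_changes n ` compat_signs n c)" "sign_changes n ` compat_signs n c \<noteq> {}"
proof -
  have "\<And>s. sign_changes n s \<le> dimN n" unfolding sign_changes_chg
    by (rule order_trans[OF chg_le]) simp
  then have "sign_changes n ` compat_signs n c \<subseteq> {0..dimN n}" by auto
  then show "finite (sign_changes n ` compat_signs n c)" using finite_subset by blast
  show "sign_changes n ` compat_signs n c \<noteq> {}" using compat_nonempty by blast
qed

lemma Splus_ge: "s \<in> compat_signs n c \<Longrightarrow> sign_changes n s \<le> Splus n c"
  unfolding Splus_def using Splus_props by simp

lemma Splus_in: "\<exists>s\<in>compat_signs n c. sign_changes n s = Splus n c"
proof -
  have "Splus n c \<in> sign_changes n ` compat_signs n c" unfolding Splus_def using Splus_props Max_in by blast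
  then show ?thesis by force
qed

lemma max_flip:
  assumes s: "s \<in> compat_signs n c" and mx: "sign_changes n s = Splus n c"
    and i: "1 \<le> i" "i < dimN n" and z: "\<And>j. i < j \<Longrightarrow> j \<le> dimN n \<Longrightarrow> c j = 0"
  shows "s i \<noteq> s (Suc i)"
proof
  assume eq: "s i = s (Suc i)"
  define t where "t = (\<lambda>j. if i < j then - s j else s j)"
  have t: "t \<in> compat_signs n c"
    unfolding compat_signs_def
  proof (intro CollectI ballI conjI impI)
    fix j assume j: "j \<in> {1..dimN n}"
    show "t j \<in> {1,-1}" using compat_pm[OF s, of j] j unfolding t_def by auto
    assume "c j \<noteq> 0"
    then have "\<not> i < j" using z j by auto
    then show "t j = sgn (c j)" using compat_sgn[OF s, of j] j \<open>c j \<noteq> 0\<close> unfolding t_def by auto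
  qed
  define C where "C = {j\<in>{1..<dimN n}. s j \<noteq> s (j + 1)}"
  define C' where "C' = {j\<in>{1..<dimN n}. t j \<noteq> t (j + 1)}"
  have "C' = insert i C"
  proof (rule set_eqI)
    fix j
    have "s (Suc i) \<in> {1,-1}" using compat_pm[OF s, of "Suc i"] i by simp
    then show "j \<in> C' \<longleftrightarrow> j \<in> insert i C"
      unfolding C_def C'_def t_def using i eq
      by (cases "j < i"; cases "j = i") auto
  qed
  moreover have "i \<notin> C" unfolding C_def using eq by simp
  moreover have "finite C" unfolding C_def by simp
  ultimately have "card C' = card C + 1" by simp
  then have "sign_changes n t = sign_changes n s + 1"
    unfolding sign_changes_def C_def C'_def by simp
  then show False using Splus_ge[OF t] mx by simp
qed

lemma max_last:
  assumes s: "s \<in> compat_signs n c" and mx: "sign_changes n s = Splus n c"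
    and q: "1 \<le> q" "q \<le> dimN n" "c q \<noteq> 0" and z: "\<And>j. q < j \<Longrightarrow> j \<le> dimN n \<Longrightarrow> c j = 0"
  shows "q + d \<le> dimN n \<Longrightarrow> s (q + d) = sgn (c q) * (-1) ^ d"
proof (induction d)
  case 0
  then show ?case using compat_sgn[OF s q(1,2,3)] by simp
next
  case (Suc d)
  have ne: "s (q + d) \<noteq> s (Suc (q + d))"
    by (rule max_flip[OF s mx]) (use q Suc z in auto)
  have "s (q+d) \<in> {1,-1}" "s (Suc (q+d)) \<in> {1,-1}" using compat_pm[OF s] q Suc.prems by auto
  then have "s (Suc (q+d)) = - s (q+d)" using ne by auto
  then show ?case using Suc by simp
qed

lemma max_unique_last:
  assumes "n \<ge> 1" and nz: "\<exists>i\<in>{1..dimN n}. c i \<noteq> 0"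
    and s: "s \<in> compat_signs n c" "sign_changes n s = Splus n c"
    and s': "s' \<in> compat_signs n c" "sign_changes n s' = Splus n c"
  shows "s (dimN n) = s' (dimN n)"
proof -
  define Q where "Q = {i\<in>{1..dimN n}. c i \<noteq> 0}"
  define q where "q = Max Q"
  have Qf: "finite Q" "Q \<noteq> {}" unfolding Q_def using nz by auto
  have qQ: "q \<in> Q" unfolding q_def using Qf Max_in by blast
  then have q: "1 \<le> q" "q \<le> dimN n" "c q \<noteq> 0" unfolding Q_def by auto
  have z: "c j = 0" if "q < j" "j \<le> dimN n" for j
  proof (rule ccontr)
    assume "c j \<noteq> 0"
    then have "j \<in> Q" unfolding Q_def using that q by auto
    then have "j \<le> q" unfolding q_def using Qf by simp
    then show False using that by simp
  qed
  show ?thesis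
    using max_last[OF s q z, of "dimN n - q"] max_last[OF s' q z, of "dimN n - q"] q by simp
qed


definition Gp :: "nat \<Rightarrow> (nat \<Rightarrow> real) \<Rightarrow> bool" where
  "Gp n c \<longleftrightarrow> (\<forall>s\<in>compat_signs n c. chp n s \<le> 2 * n - 1)"

definition Pc :: "nat \<Rightarrow> (nat \<Rightarrow> real) \<Rightarrow> bool" where
  "Pc n c \<longleftrightarrow> Splus n c < 2 * n - 1 \<or>
       (Splus n c = 2 * n - 1 \<and>
         (\<exists>s\<in>compat_signs n c. sign_changes n s = Splus n c \<and> s (dimN n) = 1))"

lemma compat_parity:
  assumes "n \<ge> 1" "s \<in> compat_signs n c"
  shows "even (sign_changes n s) \<longleftrightarrow> s 1 = s (dimN n)"
  unfolding sign_changes_chg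
  by (rule chg_parity) (use dimN_ge[OF assms(1)] compat_pm[OF assms(2)] in auto)

lemma P_imp_G:
  assumes n: "n \<ge> 1" and nz: "\<exists>i\<in>{1..dimN n}. c i \<noteq> 0" and P: "Pc n c"
  shows "Gp n c"
  unfolding Gp_def
proof
  fix s assume s: "s \<in> compat_signs n c"
  have N3: "dimN n \<ge> 3" using dimN_ge n by simp
  have dec: "chp n s = sign_changes n s + (if s 1 = 1 then 1 else 0) + (if s (dimN n) = -1 then 1 else 0)"
    by (rule chp_decomp[OF n]) (use compat_pm[OF s] in auto)
  have par: "even (sign_changes n s) \<longleftrightarrow> s 1 = s (dimN n)" using compat_parity[OF n s] .
  have pm: "s 1 \<in> {1,-1}" "s (dimN n) \<in> {1,-1}" using compat_pm[OF s] N3 by auto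
  have le: "sign_changes n s \<le> Splus n c" using Splus_ge[OF s] .
  have Mle: "Splus n c \<le> 2 * n - 1" using P unfolding Pc_def by auto
  have modd: "odd (2 * n - 1)" using n by simp
  consider "sign_changes n s + 2 \<le> 2 * n - 1" | "sign_changes n s + 1 = 2 * n - 1" | "sign_changes n s = 2 * n - 1"
    using le Mle by linarith
  then show "chp n s \<le> 2 * n - 1"
  proof cases
    case 1 then show ?thesis using dec by auto
  next
    case 2
    then have "even (sign_changes n s)" using modd by (metis odd_Suc_minus_one add.commute plus_1_eq_Suc even_Suc)
    then have "s 1 = s (dimN n)" using par by simp
    then show ?thesis using dec pm 2 by auto
  next
    case 3
    then have M: "Splus n c = 2 * n - 1" using le Mle by simp
    then obtain s0 where s0: "s0 \<in> compat_signs n c" "sign_changes n s0 = Splus n c" "s0 (dimN n) = 1"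
      using P unfolding Pc_def by auto
    have "s (dimN n) = s0 (dimN n)"
      by (rule max_unique_last[OF n nz s _ s0(1,2)]) (use 3 M in simp)
    then have sN: "s (dimN n) = 1" using s0 by simp
    have "s 1 \<noteq> s (dimN n)" using par 3 modd by simp
    then have "s 1 = -1" using sN pm by auto
    then show ?thesis using dec sN 3 by simp
  qed
qed

lemma G_imp_P:
  assumes n: "n \<ge> 1" and G: "Gp n c"
  shows "Pc n c"
proof -
  obtain s0 where s0: "s0 \<in> compat_signs n c" "sign_changes n s0 = Splus n c" using Splus_in by blast
  have N3: "dimN n \<ge> 3" using dimN_ge n by simp
  have dec: "chp n s0 = sign_changes n s0 + (if s0 1 = 1 then 1 else 0) + (if s0 (dimN n) = -1 then 1 else 0)"
    by (rule chp_decomp[OF n]) (use compat_pm[OF s0(1)] in auto)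
  have pm: "s0 (dimN n) \<in> {1,-1}" using compat_pm[OF s0(1)] N3 by auto
  have "chp n s0 \<le> 2 * n - 1" using G s0 unfolding Gp_def by auto
  then show ?thesis unfolding Pc_def using dec s0 pm by (auto split: if_splits)
qed


lemma ext_upd: "1 \<le> j \<Longrightarrow> j \<le> dimN n \<Longrightarrow> ext n (s(j := v)) = (ext n s)(j := v)"
  unfolding ext_def by (rule ext) auto

lemma chp_flip_le:
  assumes n: "n \<ge> 1" and pm: "\<And>i. 1 \<le> i \<Longrightarrow> i \<le> dimN n \<Longrightarrow> s i \<in> {1, -1}"
    and j: "1 \<le> j" "j \<le> dimN n"
    and nb: "ext n s (j - 1) = ext n s j \<or> ext n s j = ext n s (Suc j)"
  shows "chp n s \<le> chp n (s(j := - s j))"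
proof -
  have e: "ext n (s(j := - s j)) = (ext n s)(j := - ext n s j)"
    using ext_upd[OF j] j unfolding ext_def by auto
  show ?thesis unfolding chp_def e
    by (rule chg_flip(1)) (use j nb ext_pm[OF pm] in auto)
qed

lemma chp_flip_eq:
  assumes n: "n \<ge> 1" and pm: "\<And>i. 1 \<le> i \<Longrightarrow> i \<le> dimN n \<Longrightarrow> s i \<in> {1, -1}"
    and j: "1 \<le> j" "j \<le> dimN n"
    and nb: "ext n s (j - 1) = ext n s j" "ext n s j = ext n s (Suc j)"
  shows "chp n (s(j := - s j)) = chp n s + 2"
proof -
  have e: "ext n (s(j := - s j)) = (ext n s)(j := - ext n s j)"
    using ext_upd[OF j] j unfolding ext_def by auto
  show ?thesis unfolding chp_def e
    by (rule chg_flip(2)) (use j nb ext_pm[OF pm] in auto)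
qed

lemma sup_comb:
  assumes n: "n \<ge> 1" and ab: "\<alpha> \<ge> 0" "\<beta> \<ge> 0"
    and nz: "\<exists>i\<in>{1..dimN n}. c i \<noteq> 0" and G: "Gp n c"
    and w: "w = (\<lambda>i. c i + (if i = 1 then - \<alpha> else if i = dimN n then \<beta> else 0))"
  shows "Gp n w" "\<exists>i\<in>{1..dimN n}. w i \<noteq> 0"
proof -
  let ?N = "dimN n"
  have N3: "?N \<ge> 3" using dimN_ge n by simp
  show "Gp n w"
    unfolding Gp_def
  proof
    fix s assume s: "s \<in> compat_signs n w"
    have spm: "\<And>i. 1 \<le> i \<Longrightarrow> i \<le> ?N \<Longrightarrow> s i \<in> {1,-1}" using compat_pm[OF s] by blast
    define s1 where "s1 = (if s 1 = -1 \<and> c 1 > 0 then s(1 := - s 1) else s)"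
    define s2 where "s2 = (if s1 ?N = 1 \<and> c ?N < 0 then s1(?N := - s1 ?N) else s1)"
    have s1pm: "\<And>i. 1 \<le> i \<Longrightarrow> i \<le> ?N \<Longrightarrow> s1 i \<in> {1,-1}" using spm unfolding s1_def by auto
    have s2pm: "\<And>i. 1 \<le> i \<Longrightarrow> i \<le> ?N \<Longrightarrow> s2 i \<in> {1,-1}" using s1pm unfolding s2_def by auto
    have le1: "chp n s \<le> chp n s1"
    proof (cases "s 1 = -1 \<and> c 1 > 0")
      case True
      have "ext n s (1 - 1) = ext n s 1" using True N3 by (simp add: ext_def)
      then have "chp n s \<le> chp n (s(1 := - s 1))"
        by (intro chp_flip_le[OF n]) (use spm N3 in auto)
      then show ?thesis unfolding s1_def using True by simp
    next
      case False then show ?thesis unfolding s1_def by (simp only: if_False)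
    qed
    have le2: "chp n s1 \<le> chp n s2"
    proof (cases "s1 ?N = 1 \<and> c ?N < 0")
      case True
      have "ext n s1 ?N = ext n s1 (Suc ?N)" using True N3 by (simp add: ext_def)
      then have "chp n s1 \<le> chp n (s1(?N := - s1 ?N))"
        by (intro chp_flip_le[OF n]) (use s1pm N3 in auto)
      then show ?thesis unfolding s2_def using True by simp
    next
      case False then show ?thesis unfolding s2_def by (simp only: if_False)
    qed
    have s2c: "s2 \<in> compat_signs n c"
      unfolding compat_signs_def
    proof (intro CollectI ballI conjI impI)
      fix i assume i: "i \<in> {1..?N}"
      show "s2 i \<in> {1,-1}" using s2pm i by auto
      assume ci: "c i \<noteq> 0"
      consider "i = 1" | "i = ?N" | "i \<noteq> 1" "i \<noteq> ?N" by blast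
      then show "s2 i = sgn (c i)"
      proof cases
        case 1
        then have s21: "s2 i = s1 1" unfolding s2_def using N3 by auto
        show ?thesis
        proof (cases "c 1 > 0")
          case True
          have "s 1 \<in> {1,-1}" using spm[of 1] N3 by simp
          then show ?thesis using True s21 1 unfolding s1_def by auto
        next
          case False
          then have "c 1 < 0" using ci 1 by simp
          then have "w 1 < 0" using w ab by simp
          then have "s 1 = -1" using compat_sgn[OF s, of 1] N3 by simp
          then show ?thesis using False s21 1 \<open>c 1 < 0\<close> unfolding s1_def by simp
        qed
      next
        case 2
        show ?thesis
        proof (cases "c ?N < 0")
          case True
          have "s1 ?N \<in> {1,-1}" using s1pm[of ?N] N3 by simp
          then show ?thesis using True 2 unfolding s2_def by auto
        next
          case False
          then have "c ?N > 0" using ci 2 by simp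
          then have "w ?N > 0" using w ab N3 by simp
          then have "s ?N = 1" using compat_sgn[OF s, of ?N] N3 by simp
          then have "s1 ?N = 1" unfolding s1_def using N3 by auto
          then show ?thesis using False 2 \<open>c ?N > 0\<close> unfolding s2_def by simp
        qed
      next
        case 3
        then have "s2 i = s i" unfolding s2_def s1_def by auto
        moreover have "w i = c i" using w 3 by simp
        ultimately show ?thesis using compat_sgn[OF s, of i] i ci by simp
      qed
    qed
    have "chp n s2 \<le> 2 * n - 1" using G s2c unfolding Gp_def by blast
    then show "chp n s \<le> 2 * n - 1" using le1 le2 by simp
  qed
  show "\<exists>i\<in>{1..dimN n}. w i \<noteq> 0"
  proof (rule ccontr)
    assume "\<not> ?thesis"
    then have w0: "\<And>i. 1 \<le> i \<Longrightarrow> i \<le> ?N \<Longrightarrow> w i = 0" by auto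
    define s where "s = (\<lambda>i. if i = ?N then -1 else (-1::real) ^ (i + 1))"
    have sc: "s \<in> compat_signs n c"
      unfolding compat_signs_def
    proof (intro CollectI ballI conjI impI)
      fix i assume i: "i \<in> {1..?N}"
      show "s i \<in> {1,-1}" unfolding s_def
        using neg_one_even_power[of "i+1"] neg_one_odd_power[of "i+1"] by (cases "even (i+1)") auto
      assume ci: "c i \<noteq> 0"
      have wi: "w i = 0" using w0 i by auto
      consider "i = 1" | "i = ?N" | "i \<noteq> 1" "i \<noteq> ?N" by blast
      then show "s i = sgn (c i)"
      proof cases
        case 1
        then have "c i = \<alpha>" using wi w N3 by simp
        then show ?thesis using ci ab 1 N3 unfolding s_def by simp
      next
        case 2
        then have "c i = -\<beta>" using wi w N3 by simp
        then show ?thesis using ci ab 2 unfolding s_def by simp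
      next
        case 3
        then have "c i = 0" using wi w by simp
        then show ?thesis using ci by simp
      qed
    qed
    have spm: "\<And>i. 1 \<le> i \<Longrightarrow> i \<le> ?N \<Longrightarrow> s i \<in> {1,-1}" using compat_pm[OF sc] by blast
    have dec: "chp n s = sign_changes n s + (if s 1 = 1 then 1 else 0) + (if s ?N = -1 then 1 else 0)"
      by (rule chp_decomp[OF n spm])
    have "{1..<?N - 1} \<subseteq> {i\<in>{1..<?N}. s i \<noteq> s (i + 1)}"
      unfolding s_def by auto
    then have "card {1..<?N - 1} \<le> sign_changes n s" unfolding sign_changes_def
      by (rule card_mono[rotated]) simp
    then have "?N - 2 \<le> sign_changes n s" by simp
    moreover have "s 1 = 1" "s ?N = -1" unfolding s_def using N3 by auto
    ultimately have "chp n s \<ge> ?N" using dec N3 by simp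
    moreover have "chp n s \<le> 2 * n - 1" using G sc unfolding Gp_def by blast
    ultimately show False using n unfolding dimN_def by simp
  qed
qed


lemma pat_step:
  fixes L1 L2 k :: nat
  assumes "L1 \<le> k - 1" "1 \<le> k"
  shows "min (Suc i) L1 + min (Suc i - Suc k) L2 = (min i L1 + min (i - Suc k) L2) + (if i < L1 \<or> (Suc k \<le> i \<and> i < Suc k + L2) then 1 else 0)"
proof -
  have a: "min (Suc i) L1 = min i L1 + (if i < L1 then 1 else 0)" by auto
  have b: "min (Suc i - Suc k) L2 = min (i - Suc k) L2 + (if Suc k \<le> i \<and> i < Suc k + L2 then 1 else 0)"
  proof (cases "Suc k \<le> i")
    case True
    then have "Suc i - Suc k = Suc (i - Suc k)" by simp
    then show ?thesis using True by auto
  next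
    case False
    then show ?thesis by simp
  qed
  have c: "\<not> (i < L1 \<and> Suc k \<le> i)" using assms by auto
  show ?thesis using a b c by auto
qed

lemma pat:
  assumes k: "1 \<le> k" and L: "L1 \<le> k - 1" "k + L2 \<le> N"
  defines "t \<equiv> \<lambda>i::nat. - ((-1::real) ^ (min i L1 + min (i - Suc k) L2))"
  shows "\<And>i. t i \<in> {1, -1}" "t 0 = -1" "t (Suc N) = - ((-1) ^ (L1 + L2))"
    "t (k - 1) = - ((-1) ^ L1)" "t k = - ((-1) ^ L1)" "t (Suc k) = - ((-1) ^ L1)"
    "chg t 0 (Suc N) = L1 + L2"
proof -
  show "\<And>i. t i \<in> {1, -1}"
  proof -
    fix i
    let ?p = "min i L1 + min (i - Suc k) L2"
    show "t i \<in> {1, -1}" unfolding t_def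
      using neg_one_even_power[of ?p] neg_one_odd_power[of ?p] by (cases "even ?p") auto
  qed
  show "t 0 = -1" unfolding t_def by simp
  have "min (Suc N) L1 = L1" "min (Suc N - Suc k) L2 = L2" using L k by auto
  then show "t (Suc N) = - ((-1) ^ (L1 + L2))" unfolding t_def by simp
  show "t (k - 1) = - ((-1) ^ L1)" "t k = - ((-1) ^ L1)" "t (Suc k) = - ((-1) ^ L1)"
  proof -
    have "min (k-1) L1 = L1" "min k L1 = L1" "min (Suc k) L1 = L1" using L k by auto
    moreover have "k - 1 - Suc k = 0" "k - Suc k = 0" "Suc k - Suc k = 0" by auto
    ultimately show "t (k - 1) = - ((-1) ^ L1)" "t k = - ((-1) ^ L1)" "t (Suc k) = - ((-1) ^ L1)"
      unfolding t_def by simp_all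
  qed
  have st: "t (Suc i) = (if i < L1 \<or> (Suc k \<le> i \<and> i < Suc k + L2) then - t i else t i)" for i
  proof -
    have e: "min (Suc i) L1 + min (Suc i - Suc k) L2 = (min i L1 + min (i - Suc k) L2) + (if i < L1 \<or> (Suc k \<le> i \<and> i < Suc k + L2) then 1 else 0)"
      by (rule pat_step[OF L(1) k])
    show ?thesis unfolding t_def e by (cases "i < L1 \<or> (Suc k \<le> i \<and> i < Suc k + L2)") (simp_all only: if_True if_False power_add, simp_all)
  qed
  have nz: "t i \<noteq> - t i" for i unfolding t_def by simp
  have "{i\<in>{0..<Suc N}. t i \<noteq> t (Suc i)} = {0..<L1} \<union> {Suc k..<Suc k + L2}"
  proof (rule set_eqI)
    fix i show "i \<in> {i\<in>{0..<Suc N}. t i \<noteq> t (Suc i)} \<longleftrightarrow> i \<in> {0..<L1} \<union> {Suc k..<Suc k + L2}"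
      using st[of i] nz[of i] L k by auto
  qed
  moreover have "{0..<L1} \<inter> {Suc k..<Suc k + L2} = {}" using L k by auto
  ultimately show "chg t 0 (Suc N) = L1 + L2" unfolding chg_def by (simp add: card_Un_disjoint)
qed

lemma choose_L1:
  assumes n: "n \<ge> 1" and k: "1 \<le> k" "k \<le> dimN n" and d: "d \<in> {1, -1::real}"
    and k1: "k = 1 \<Longrightarrow> d = -1" and kN: "k = dimN n \<Longrightarrow> d = 1"
  shows "\<exists>L1. L1 \<le> k - 1 \<and> L1 \<le> 2 * n - 1 \<and> k + (2 * n - 1 - L1) \<le> dimN n \<and> - ((-1) ^ L1) = d"
proof -
  define lo where "lo = k - 2 * n"
  have N: "dimN n = 4 * n - 1" unfolding dimN_def by simp
  show ?thesis
  proof (cases "- ((-1::real) ^ lo) = d")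
    case True
    show ?thesis
      by (rule exI[of _ lo]) (use True n k N in \<open>auto simp: lo_def\<close>)
  next
    case False
    have "k \<noteq> 1"
    proof
      assume "k = 1" then have "lo = 0" unfolding lo_def using n by simp
      then show False using False k1 \<open>k = 1\<close> by simp
    qed
    moreover have "k \<noteq> dimN n"
    proof
      assume kk: "k = dimN n" then have "lo = 2 * n - 1" unfolding lo_def N using n by simp
      moreover have "odd (2 * n - 1)" using n by simp
      ultimately have "- ((-1::real) ^ lo) = 1" by simp
      then show False using False kN kk by simp
    qed
    ultimately have k2: "2 \<le> k" "k \<le> 4 * n - 2" using k N by auto
    have "(-1::real) ^ lo = 1 \<or> (-1::real) ^ lo = -1"
      using neg_one_even_power[of lo] neg_one_odd_power[of lo] by (cases "even lo") auto
    then have "- ((-1::real) ^ (lo + 1)) = d" using False d by auto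
    then show ?thesis
      by (intro exI[of _ "lo + 1"]) (use k2 n k N in \<open>auto simp: lo_def\<close>)
  qed
qed


lemma sgn_pm_mult: "t \<in> {1, -1::real} \<Longrightarrow> x > 0 \<Longrightarrow> sgn (t * x) = t"
  by (auto simp: sgn_mult)

lemma sub_comb:
  assumes n: "n \<ge> 1" and k: "1 \<le> k" "k \<le> dimN n" and ak: "a k \<noteq> 0"
    and k1: "k = 1 \<Longrightarrow> a 1 > 0" and kN: "k = dimN n \<Longrightarrow> a (dimN n) < 0"
  shows "\<exists>c. (\<forall>i. (i < 1 \<or> i > dimN n) \<longrightarrow> c i = 0) \<and> (\<exists>i\<in>{1..dimN n}. c i \<noteq> 0) \<and>
             Gp n c \<and> \<not> Gp n (\<lambda>i. c i + a i)"
proof -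
  let ?N = "dimN n"
  define d where "d = - sgn (a k)"
  have d: "d \<in> {1,-1}" using ak unfolding d_def by (auto simp: sgn_if)
  obtain L1 where L1: "L1 \<le> k - 1" "L1 \<le> 2 * n - 1" "k + (2 * n - 1 - L1) \<le> ?N" "- ((-1) ^ L1) = d"
    using choose_L1[OF n k d] k1 kN unfolding d_def by auto
  define L2 where "L2 = 2 * n - 1 - L1"
  have L2: "k + L2 \<le> ?N" "L1 + L2 = 2 * n - 1" using L1 unfolding L2_def by auto
  define t where "t = (\<lambda>i::nat. - ((-1::real) ^ (min i L1 + min (i - Suc k) L2)))"
  note P = pat[OF k(1) L1(1) L2(1)]
  have tpm: "\<And>i. t i \<in> {1,-1}" unfolding t_def by (rule P(1))
  have t0: "t 0 = -1" unfolding t_def by (rule P(2))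
  have tN: "t (Suc ?N) = 1" using P(3) L2(2) n unfolding t_def by simp
  have tk: "t (k - 1) = d" "t k = d" "t (Suc k) = d" using P(4,5,6) L1(4) unfolding t_def by auto
  have tch: "chg t 0 (Suc ?N) = 2 * n - 1" using P(7) L2(2) unfolding t_def by simp
  define c where "c = (\<lambda>i. if 1 \<le> i \<and> i \<le> ?N then (if i = k then t i * (\<bar>a k\<bar> / 2) else t i * (\<bar>a i\<bar> + 1)) else 0)"
  have csgn: "sgn (c i) = t i" if "1 \<le> i" "i \<le> ?N" for i
    unfolding c_def using that ak tpm[of i] by (auto simp: sgn_pm_mult)
  have cnz: "c i \<noteq> 0" if "1 \<le> i" "i \<le> ?N" for i
    using csgn[OF that] tpm[of i] by auto
  have casgn: "sgn (c i + a i) = (if i = k then - t i else t i)" if "1 \<le> i" "i \<le> ?N" for i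
  proof (cases "i = k")
    case True
    have "c i + a i = a k / 2"
    proof -
      have "c i = - sgn (a k) * (\<bar>a k\<bar> / 2)" unfolding c_def using True that tk d_def by simp
      also have "\<dots> = - a k / 2" by (simp add: sgn_mult_abs)
      finally show ?thesis using True by simp
    qed
    then show ?thesis using True tk d_def by (simp add: sgn_if)
  next
    case False
    have ci: "c i = t i * (\<bar>a i\<bar> + 1)" unfolding c_def using that False by simp
    have "t i = 1 \<or> t i = -1" using tpm[of i] by auto
    then show ?thesis
    proof
      assume "t i = 1" then show ?thesis using ci False by (auto simp: sgn_if)
    next
      assume "t i = -1" then show ?thesis using ci False by (auto simp: sgn_if)
    qed
  qed
  have Gc: "Gp n c"
    unfolding Gp_def
  proof
    fix s assume s: "s \<in> compat_signs n c"
    have "chp n s = chg t 0 (Suc ?N)"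
      unfolding chp_def
    proof (rule chg_cong)
      fix i assume "0 \<le> i" "i \<le> Suc ?N"
      then show "ext n s i = t i"
        using compat_sgn[OF s, of i] cnz[of i] csgn[of i] t0 tN unfolding ext_def by auto
    qed
    then show "chp n s \<le> 2 * n - 1" using tch by simp
  qed
  have nG: "\<not> Gp n (\<lambda>i. c i + a i)"
  proof
    assume G: "Gp n (\<lambda>i. c i + a i)"
    define s0 where "s0 = (\<lambda>i. sgn (c i + a i))"
    have s0c: "s0 \<in> compat_signs n (\<lambda>i. c i + a i)"
      unfolding compat_signs_def s0_def
    proof (intro CollectI ballI conjI impI)
      fix i assume i: "i \<in> {1..?N}"
      show "sgn (c i + a i) \<in> {1,-1}" using casgn[of i] i tpm[of i] by auto
    qed simp
    define t' where "t' = t(k := - t k)"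
    have "chp n s0 = chg t' 0 (Suc ?N)"
      unfolding chp_def
    proof (rule chg_cong)
      fix i assume "0 \<le> i" "i \<le> Suc ?N"
      then show "ext n s0 i = t' i"
        using casgn[of i] t0 tN k unfolding ext_def s0_def t'_def by auto
    qed
    also have "\<dots> = chg t 0 (Suc ?N) + 2" unfolding t'_def
      by (rule chg_flip(2)) (use k tk tpm in auto)
    finally have "chp n s0 = 2 * n + 1" using tch n by simp
    moreover have "chp n s0 \<le> 2 * n - 1" using G s0c unfolding Gp_def by blast
    ultimately show False by simp
  qed
  show ?thesis
    by (rule exI[of _ c]) (use Gc nG cnz k in \<open>auto simp: c_def\<close>)
qed


definition lin :: "nat \<Rightarrow> (nat \<Rightarrow> nat \<Rightarrow> real) \<Rightarrow> (nat \<Rightarrow> real) \<Rightarrow> nat \<Rightarrow> real" where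
  "lin n E c = (\<lambda>k. \<Sum>i=1..dimN n. c i * E i k)"

lemma fun_sum_apply: "(sum f A) x = (\<Sum>i\<in>A. f i x)"
  by (induction A rule: infinite_finite_induct) auto

lemma Jform_lin: "Jform n v (lin n E c) = (\<Sum>l=1..dimN n. c l * Jform n v (E l))"
proof -
  have "Jform n v (lin n E c) = (\<Sum>i=1..dimN n. \<Sum>l=1..dimN n. c l * ((-1) ^ i * v i * E l (4 * n - i)))"
    unfolding Jform_def lin_def by (simp add: sum_distrib_left mult_ac)
  also have "\<dots> = (\<Sum>l=1..dimN n. \<Sum>i=1..dimN n. c l * ((-1) ^ i * v i * E l (4 * n - i)))"
    by (rule sum.swap)
  also have "\<dots> = (\<Sum>l=1..dimN n. c l * Jform n v (E l))"
    unfolding Jform_def by (simp add: sum_distrib_left)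
  finally show ?thesis .
qed

lemma gram_coef:
  assumes n: "n \<ge> 1" and J: "is_J_basis n E" and j: "1 \<le> j" "j \<le> dimN n"
  shows "Jform n (E j) (lin n E c) = (-1) ^ j * c (4 * n - j)"
proof -
  have "Jform n (E j) (lin n E c) = (\<Sum>l=1..dimN n. c l * Jmat n j l)"
    unfolding Jform_lin using J j unfolding is_J_basis_def by (intro sum.cong) auto
  also have "\<dots> = (\<Sum>l=1..dimN n. if l = 4 * n - j then c l * (-1) ^ j else 0)"
    unfolding Jmat_def by (intro sum.cong) auto
  also have "\<dots> = c (4 * n - j) * (-1) ^ j"
    using j unfolding dimN_def by (subst sum.delta) auto
  finally show ?thesis by simp
qed

lemma lin_inj:
  assumes n: "n \<ge> 1" and J: "is_J_basis n E" and eq: "lin n E c = lin n E c'"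
    and l: "1 \<le> l" "l \<le> dimN n"
  shows "c l = c' l"
proof -
  define j where "j = 4 * n - l"
  have j: "1 \<le> j" "j \<le> dimN n" "4 * n - j = l" using l n unfolding j_def dimN_def by auto
  have "(-1) ^ j * c l = (-1) ^ j * c' l"
    using gram_coef[OF n J j(1,2), of c] gram_coef[OF n J j(1,2), of c'] eq j(3) by simp
  then show ?thesis by simp
qed

lemma lin_Rvec:
  assumes J: "is_J_basis n E" shows "lin n E c \<in> Rvec n"
  using J unfolding Rvec_def lin_def is_J_basis_def by auto

lemma lin_delta:
  assumes "1 \<le> i" "i \<le> dimN n"
  shows "lin n E (\<lambda>l. if l = i then 1 else 0) = E i"
proof (rule ext)
  fix x
  have "lin n E (\<lambda>l. if l = i then 1 else 0) x = (\<Sum>l\<in>{1..dimN n}. if l = i then E i x else 0)"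
    unfolding lin_def by (intro sum.cong) auto
  also have "\<dots> = E i x" using assms by simp
  finally show "lin n E (\<lambda>l. if l = i then 1 else 0) x = E i x" .
qed

lemma lin_span:
  assumes n: "n \<ge> 1" and J: "is_J_basis n E" and w: "w \<in> Rvec n"
  shows "\<exists>c. w = lin n E c"
proof -
  let ?N = "dimN n"
  interpret V: vector_space "\<lambda>(r::real) (f::nat \<Rightarrow> real). (\<lambda>k. r * f k)"
    by unfold_locales (auto simp: fun_eq_iff algebra_simps)
  define T where "T = (\<lambda>i. \<lambda>k. if k = i then (1::real) else 0) ` {1..?N}"
  define S where "S = E ` {1..?N}"
  have fT: "finite T" "card T \<le> ?N" unfolding T_def using card_image_le[of "{1..?N}"] by auto
  have RT: "v \<in> V.span T" if v: "v \<in> Rvec n" for v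
  proof -
    have "v = (\<Sum>i\<in>{1..?N}. (\<lambda>k. v i * (if k = i then 1 else 0)))"
    proof (rule ext)
      fix x
      have "(\<Sum>i\<in>{1..?N}. (\<lambda>k. v i * (if k = i then 1 else 0))) x = (\<Sum>i\<in>{1..?N}. if i = x then v x else 0)"
        unfolding fun_sum_apply by (intro sum.cong) auto
      also have "\<dots> = (if x \<in> {1..?N} then v x else 0)" by simp
      also have "\<dots> = v x"
      proof (cases "x \<in> {1..?N}")
        case False
        then have "x < 1 \<or> x > ?N" by auto
        moreover have "\<forall>i. (i < 1 \<or> i > ?N) \<longrightarrow> v i = 0" using v unfolding Rvec_def by simp
        ultimately have "v x = 0" by blast
        then show ?thesis using False by simp
      qed simp
      finally show "v x = (\<Sum>i\<in>{1..?N}. (\<lambda>k. v i * (if k = i then 1 else 0))) x" by (rule sym)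
    qed
    also have "\<dots> \<in> V.span T"
      by (intro V.span_sum V.span_scale V.span_base) (auto simp: T_def)
    finally show ?thesis .
  qed
  have injE: "inj_on E {1..?N}"
  proof
    fix i j assume i: "i \<in> {1..?N}" and j: "j \<in> {1..?N}" and eq: "E i = E j"
    define ci where "ci = (\<lambda>l. if l = i then (1::real) else 0)"
    define cj where "cj = (\<lambda>l. if l = j then (1::real) else 0)"
    have "lin n E ci = E i" using i lin_delta[of i n E] unfolding ci_def by auto
    moreover have "lin n E cj = E j" using j lin_delta[of j n E] unfolding cj_def by auto
    ultimately have "ci i = cj i" using lin_inj[OF n J, of ci cj i] eq i by auto
    then show "i = j" unfolding ci_def cj_def by (auto split: if_splits)
  qed
  have fS: "finite S" "card S = ?N" unfolding S_def using card_image[OF injE] by auto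
  have sumS: "(\<Sum>v\<in>S. (\<lambda>k. u v * v k)) = lin n E (\<lambda>i. u (E i))" for u
  proof -
    have "(\<Sum>v\<in>S. (\<lambda>k. u v * v k)) = (\<Sum>i\<in>{1..?N}. (\<lambda>k. u (E i) * E i k))"
      unfolding S_def by (subst sum.reindex[OF injE]) simp
    then show ?thesis unfolding lin_def by (simp add: fun_eq_iff fun_sum_apply)
  qed
  have indS: "V.independent S"
  proof
    assume "V.dependent S"
    then obtain u where u: "\<exists>v\<in>S. u v \<noteq> 0" "(\<Sum>v\<in>S. (\<lambda>k. u v * v k)) = 0"
      using V.dependent_finite[OF fS(1)] by auto
    have l0: "lin n E (\<lambda>i. 0) = lin n E (\<lambda>i. u (E i))" using u(2) sumS[of u] unfolding lin_def by (simp add: fun_eq_iff)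
    obtain v where v: "v \<in> S" "u v \<noteq> 0" using u(1) by blast
    then obtain i where i: "i \<in> {1..?N}" "v = E i" unfolding S_def by auto
    have "0 = u (E i)" using lin_inj[OF n J l0, of i] i by auto
    then show False using v i by simp
  qed
  have "w \<in> V.span S"
  proof (rule ccontr)
    assume nw: "w \<notin> V.span S"
    then have ind: "V.independent (insert w S)" using V.independent_insertI indS by blast
    have "insert w S \<subseteq> V.span T"
      using RT w lin_Rvec[OF J] J unfolding S_def is_J_basis_def by auto
    then have "card (insert w S) \<le> card T" using V.independent_span_bound[OF fT(1) ind] by simp
    moreover have "w \<notin> S" using nw V.span_base by blast
    then have "card (insert w S) = ?N + 1" using fS by simp
    ultimately show False using fT by simp
  qed
  then obtain u where "w = (\<Sum>v\<in>S. (\<lambda>k. u v * v k))" using V.span_finite[OF fS(1)] by auto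
  then show ?thesis using sumS by blast
qed


definition supp :: "nat \<Rightarrow> (nat \<Rightarrow> real) \<Rightarrow> bool" where
  "supp n c \<longleftrightarrow> (\<forall>i. (i < 1 \<or> i > dimN n) \<longrightarrow> c i = 0)"

lemma supp_eq:
  assumes n: "n \<ge> 1" and J: "is_J_basis n E" and c: "supp n c" and c': "supp n c'"
    and eq: "lin n E c = lin n E c'"
  shows "c = c'"
proof (rule ext)
  fix i show "c i = c' i"
  proof (cases "1 \<le> i \<and> i \<le> dimN n")
    case True then show ?thesis using lin_inj[OF n J eq] by auto
  next
    case False
    then have h: "i < 1 \<or> i > dimN n" by auto
    have "c i = 0" using c h unfolding supp_def by blast
    moreover have "c' i = 0" using c' h unfolding supp_def by blast
    ultimately show ?thesis by simp
  qed
qed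

lemma coords_lin:
  assumes n: "n \<ge> 1" and J: "is_J_basis n E" and c: "supp n c"
  shows "coords n E (lin n E c) = c"
  unfolding coords_def
proof (rule the_equality)
  show "(\<forall>i. i < 1 \<or> dimN n < i \<longrightarrow> c i = 0) \<and> lin n E c = (\<lambda>k. \<Sum>i = 1..dimN n. c i * E i k)"
    using c unfolding supp_def lin_def by simp
  fix c' assume "(\<forall>i. i < 1 \<or> dimN n < i \<longrightarrow> c' i = 0) \<and> lin n E c = (\<lambda>k. \<Sum>i = 1..dimN n. c' i * E i k)"
  then have "supp n c'" "lin n E c = lin n E c'" unfolding supp_def lin_def by auto
  then show "c' = c" using supp_eq[OF n J c] by auto
qed

lemma Rvec_rep:
  assumes n: "n \<ge> 1" and J: "is_J_basis n E" and w: "w \<in> Rvec n"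
  shows "\<exists>c. supp n c \<and> w = lin n E c"
proof -
  obtain c where c: "w = lin n E c" using lin_span[OF n J w] by blast
  define c' where "c' = (\<lambda>i. if 1 \<le> i \<and> i \<le> dimN n then c i else 0)"
  have "supp n c'" unfolding supp_def c'_def by auto
  moreover have "lin n E c' = lin n E c" unfolding lin_def c'_def by (intro ext sum.cong) auto
  ultimately show ?thesis using c by auto
qed

lemma lin_add: "lin n E (\<lambda>i. c i + d i) = (\<lambda>k. lin n E c k + lin n E d k)"
  unfolding lin_def by (simp add: sum.distrib distrib_right)

lemma lin_nz:
  assumes n: "n \<ge> 1" and J: "is_J_basis n E" and c: "supp n c"
  shows "lin n E c \<noteq> (\<lambda>_. 0) \<longleftrightarrow> (\<exists>i\<in>{1..dimN n}. c i \<noteq> 0)"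
proof -
  have z: "lin n E (\<lambda>_. 0) = (\<lambda>_. 0)" unfolding lin_def by simp
  have s0: "supp n (\<lambda>_. 0)" unfolding supp_def by simp
  have "lin n E c = (\<lambda>_. 0) \<longleftrightarrow> c = (\<lambda>_. 0)"
    using supp_eq[OF n J c s0] z by auto
  also have "\<dots> \<longleftrightarrow> \<not> (\<exists>i\<in>{1..dimN n}. c i \<noteq> 0)"
  proof
    assume "c = (\<lambda>_. 0)" then show "\<not> (\<exists>i\<in>{1..dimN n}. c i \<noteq> 0)" by simp
  next
    assume h: "\<not> (\<exists>i\<in>{1..dimN n}. c i \<noteq> 0)"
    show "c = (\<lambda>_. 0)"
    proof (rule ext)
      fix i show "c i = 0"
      proof (cases "i \<in> {1..dimN n}")
        case True then show ?thesis using h by blast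
      next
        case False then have "i < 1 \<or> i > dimN n" by auto
        then show ?thesis using c unfolding supp_def by blast
      qed
    qed
  qed
  finally show ?thesis by blast
qed

lemma H_char:
  assumes n: "n \<ge> 1" and J: "is_J_basis n E" and c: "supp n c"
  shows "lin n E c \<in> crooked_H n E \<longleftrightarrow> (\<exists>i\<in>{1..dimN n}. c i \<noteq> 0) \<and> Gp n c"
proof -
  have "lin n E c \<in> crooked_H n E \<longleftrightarrow> lin n E c \<in> Rvec n \<and> lin n E c \<noteq> (\<lambda>_. 0) \<and> Pc n (coords n E (lin n E c))"
    unfolding crooked_H_def Pc_def Let_def by simp
  also have "\<dots> \<longleftrightarrow> (\<exists>i\<in>{1..dimN n}. c i \<noteq> 0) \<and> Pc n c"
    unfolding coords_lin[OF n J c] using lin_Rvec[OF J] lin_nz[OF n J c] by simp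
  finally have "lin n E c \<in> crooked_H n E \<longleftrightarrow> (\<exists>i\<in>{1..dimN n}. c i \<noteq> 0) \<and> Pc n c" .
  then show ?thesis using P_imp_G[OF n] G_imp_P[OF n] by blast
qed

lemma lin_two:
  assumes n: "n \<ge> 1" and a: "\<And>i. 1 < i \<Longrightarrow> i < dimN n \<Longrightarrow> a i = 0"
  shows "lin n E a = (\<lambda>k. a 1 * E 1 k + a (dimN n) * E (dimN n) k)"
proof (rule ext)
  fix k
  have N3: "dimN n \<ge> 3" using dimN_ge n by simp
  have "lin n E a k = (\<Sum>i\<in>{1..dimN n}. (if i = 1 then a 1 * E 1 k else 0) + (if i = dimN n then a (dimN n) * E (dimN n) k else 0))"
    unfolding lin_def
  proof (intro sum.cong refl)
    fix i assume i: "i \<in> {1..dimN n}"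
    show "a i * E i k = (if i = 1 then a 1 * E 1 k else 0) + (if i = dimN n then a (dimN n) * E (dimN n) k else 0)"
      using a[of i] i N3 by auto
  qed
  also have "\<dots> = a 1 * E 1 k + a (dimN n) * E (dimN n) k"
    using N3 by (simp add: sum.distrib)
  finally show "lin n E a k = a 1 * E 1 k + a (dimN n) * E (dimN n) k" .
qed

theorem proposition5p5:
  fixes n :: nat and E :: "nat \<Rightarrow> nat \<Rightarrow> real"
  assumes "n \<ge> 1"
    and "is_J_basis n E"
    and "pos_oriented n E"
  shows "stem_quadrant n E =
    {u. \<exists>\<alpha> \<beta>. \<alpha> \<ge> 0 \<and> \<beta> \<ge> 0 \<and> u = (\<lambda>k. - \<alpha> * E 1 k + \<beta> * E (dimN n) k)}"
proof -
  note n = assms(1) and J = assms(2)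
  let ?N = "dimN n"
  have N3: "?N \<ge> 3" using dimN_ge n by simp
  show ?thesis
  proof (rule set_eqI, rule iffI)
    fix u assume u: "u \<in> stem_quadrant n E"
    then have uR: "u \<in> Rvec n" and uH: "\<And>v. v \<in> crooked_H n E \<Longrightarrow> (\<lambda>k. u k + v k) \<in> crooked_H n E"
      unfolding stem_quadrant_def by auto
    obtain a where a: "supp n a" "u = lin n E a" using Rvec_rep[OF n J uR] by blast
    have bad: False if k: "1 \<le> k" "k \<le> ?N" "a k \<noteq> 0" "k = 1 \<Longrightarrow> a 1 > 0" "k = ?N \<Longrightarrow> a ?N < 0" for k
    proof -
      obtain c where c: "\<forall>i. (i < 1 \<or> i > ?N) \<longrightarrow> c i = 0" "\<exists>i\<in>{1..?N}. c i \<noteq> 0" "Gp n c"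
          "\<not> Gp n (\<lambda>i. c i + a i)"
        using sub_comb[OF n k] by blast
      have sc: "supp n c" using c(1) unfolding supp_def by simp
      have vH: "lin n E c \<in> crooked_H n E" using H_char[OF n J sc] c by blast
      have sac: "supp n (\<lambda>i. c i + a i)" using sc a(1) unfolding supp_def by simp
      have "(\<lambda>k. u k + lin n E c k) = lin n E (\<lambda>i. c i + a i)"
        unfolding a(2) lin_add by (simp add: add.commute)
      then have "lin n E (\<lambda>i. c i + a i) \<in> crooked_H n E" using uH[OF vH] by simp
      then show False using H_char[OF n J sac] c(4) by blast
    qed
    have a0: "a i = 0" if "1 < i" "i < ?N" for i
      using bad[of i] that by (cases "a i = 0") auto
    have a1: "a 1 \<le> 0" using bad[of 1] N3 by (cases "a 1 > 0") auto
    have aN: "a ?N \<ge> 0" using bad[of ?N] N3 by (cases "a ?N < 0") auto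
    have "u = (\<lambda>k. - (- a 1) * E 1 k + a ?N * E ?N k)" using lin_two[OF n a0] a(2) by simp
    then show "u \<in> {u. \<exists>\<alpha> \<beta>. \<alpha> \<ge> 0 \<and> \<beta> \<ge> 0 \<and> u = (\<lambda>k. - \<alpha> * E 1 k + \<beta> * E (dimN n) k)}"
      using a1 aN by (intro CollectI exI[of _ "- a 1"] exI[of _ "a ?N"]) auto
  next
    fix u assume "u \<in> {u. \<exists>\<alpha> \<beta>. \<alpha> \<ge> 0 \<and> \<beta> \<ge> 0 \<and> u = (\<lambda>k. - \<alpha> * E 1 k + \<beta> * E (dimN n) k)}"
    then obtain \<alpha> \<beta> where ab: "\<alpha> \<ge> 0" "\<beta> \<ge> 0" "u = (\<lambda>k. - \<alpha> * E 1 k + \<beta> * E (dimN n) k)" by blast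
    define a where "a = (\<lambda>i. if i = 1 then - \<alpha> else if i = ?N then \<beta> else (0::real))"
    have sa: "supp n a" unfolding supp_def a_def using N3 by auto
    have ua: "u = lin n E a"
      using lin_two[OF n, of a E] ab(3) N3 unfolding a_def by auto
    show "u \<in> stem_quadrant n E"
      unfolding stem_quadrant_def
    proof (intro CollectI conjI ballI)
      show "u \<in> Rvec n" using ua lin_Rvec[OF J] by simp
      fix v assume v: "v \<in> crooked_H n E"
      then have vR: "v \<in> Rvec n" unfolding crooked_H_def by simp
      obtain c where c: "supp n c" "v = lin n E c" using Rvec_rep[OF n J vR] by blast
      have cH: "(\<exists>i\<in>{1..?N}. c i \<noteq> 0) \<and> Gp n c" using H_char[OF n J c(1)] v c(2) by simp
      define w where "w = (\<lambda>i. c i + (if i = 1 then - \<alpha> else if i = ?N then \<beta> else 0))"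
      note W = sup_comb[OF n ab(1,2) conjunct1[OF cH] conjunct2[OF cH] w_def]
      have wa: "w = (\<lambda>i. c i + a i)" unfolding w_def a_def by simp
      have sw: "supp n w" using c(1) sa unfolding wa supp_def by simp
      have "w \<in> {w. lin n E w \<in> crooked_H n E}" using H_char[OF n J sw] W by simp
      moreover have "(\<lambda>k. u k + v k) = lin n E w"
        unfolding ua c(2) wa lin_add by (simp add: add.commute)
      ultimately show "(\<lambda>k. u k + v k) \<in> crooked_H n E" by simp
    qed
  qed
qed

end
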